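(* Let $p\equiv 1\bmod 4$ be a prime and let $\alpha>0$ and $0<\beta<2$ be such that \[ \bigg|\sum_{a,b\in S}\chi(a-b)\bigg|<|S|^{2-\beta}\qquad\text{for all } S\subseteq\mathbb{F}_p \text{ with } |S|>p^\alpha . \] Then for any $\tau\ge 2\alpha/(2-\beta)$ and any disjoint sets $I,J\subseteq\mathbb{F}_p$ with $|J|\le|I|\le p^{2\tau/(2-\beta)}$, we have \[ \bigg|\sum_{i\in I,\,j\in J}\chi(i-j)\bigg|\le p^\tau\sqrt{3|I||J|}. \]
   Context: $\mathbb{F}_p$ is the field with $p$ elements and $\chi:\mathbb{F}_p\to\{-1,0,1\}$ is the Legendre symbol: $\chi(0)=0$, $\chi(x)=1$ if $x$ is a nonzero square in $\mathbb{F}_p$, and $\chi(x)=-1$ otherwise. *)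

theory Defs
  imports "HOL-Analysis.Analysis" "HOL-Number_Theory.Number_Theory"
begin

text \<open>The field F_p is modelled by the residues {0..<p} (as integers); the
  Legendre symbol chi(x) is the library's Legendre x p, which depends only on x mod p.\<close>

definition Fp :: "int \<Rightarrow> int set" where
  "Fp p = {0..<p}"

definition chi_sum :: "int \<Rightarrow> int set \<Rightarrow> int set \<Rightarrow> int" where
  "chi_sum p A B = (\<Sum>a\<in>A. \<Sum>b\<in>B. Legendre (a - b) p)"

end

theory Submission
  imports Defs
begin

lemma Legendre_range: "Legendre a p \<in> {-1,0,1}"
  unfolding Legendre_def by auto

lemma Legendre_neg:
  fixes p :: int
  assumes "prime p" "[p = 1] (mod 4)"
  shows "Legendre (-a) p = Legendre a p"
proof -
  have p4: "p mod 4 = 1" using assms(2) unfolding cong_def by simp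
  have pge: "p \<ge> 2" using assms(1) prime_ge_2_int by blast
  have p2: "p > 2" using p4 pge by presburger
  define q where "q = nat p"
  have pq: "p = int q" using p2 unfolding q_def by simp
  have qprime: "prime q" using assms(1) unfolding pq by simp
  have q2: "2 < q" using p2 unfolding pq by simp
  have q4: "q mod 4 = 1" using p4 unfolding pq by presburger
  have k: "(q - 1) div 2 = 2 * ((q - 1) div 4)" using q4 by presburger
  have e1: "[Legendre (-a) (int q) = (-a) ^ ((q - 1) div 2)] (mod (int q))"
    by (rule euler_criterion[OF qprime q2])
  have e2: "[Legendre a (int q) = a ^ ((q - 1) div 2)] (mod (int q))"
    by (rule euler_criterion[OF qprime q2])
  have pw: "(-a) ^ ((q - 1) div 2) = a ^ ((q - 1) div 2)"
  proof -
    define r where "r = (q - 1) div 4"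
    have kk: "(q - 1) div 2 = 2 * r" using k unfolding r_def .
    show ?thesis unfolding kk power_mult by simp
  qed
  have "[Legendre (-a) (int q) = Legendre a (int q)] (mod (int q))"
    using e1 e2 unfolding pw using cong_sym cong_trans by metis
  then have d: "int q dvd (Legendre (-a) (int q) - Legendre a (int q))"
    by (simp add: cong_iff_dvd_diff)
  then have d: "p dvd (Legendre (-a) p - Legendre a p)" unfolding pq .
  have r1: "Legendre (-a) p \<in> {-1,0,1}" and r2: "Legendre a p \<in> {-1,0,1}"
    by (rule Legendre_range)+
  show ?thesis
  proof (rule ccontr)
    assume ne: "Legendre (-a) p \<noteq> Legendre a p"
    have b: "\<bar>Legendre (-a) p - Legendre a p\<bar> \<le> 2" "Legendre (-a) p - Legendre a p \<noteq> 0"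
      using r1 r2 ne by auto
    have "\<bar>p\<bar> \<le> \<bar>Legendre (-a) p - Legendre a p\<bar>"
      by (rule dvd_imp_le_int[OF b(2) d])
    then show False using p2 b(1) by linarith
  qed
qed

lemma chi_sum_swap:
  fixes p :: int
  assumes "prime p" "[p = 1] (mod 4)"
  shows "chi_sum p B A = chi_sum p A B"
proof -
  have "chi_sum p B A = (\<Sum>b\<in>B. \<Sum>a\<in>A. Legendre (-(a - b)) p)"
    unfolding chi_sum_def by simp
  also have "\<dots> = (\<Sum>b\<in>B. \<Sum>a\<in>A. Legendre (a - b) p)"
    by (intro sum.cong refl Legendre_neg[OF assms])
  also have "\<dots> = chi_sum p A B"
    unfolding chi_sum_def by (rule sum.swap)
  finally show ?thesis .
qed

lemma chi_sum_union:
  fixes p :: int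
  assumes "prime p" "[p = 1] (mod 4)" "finite I" "finite J" "I \<inter> J = {}"
  shows "chi_sum p (I \<union> J) (I \<union> J) = chi_sum p I I + chi_sum p J J + 2 * chi_sum p I J"
proof -
  have "chi_sum p (I \<union> J) (I \<union> J) = chi_sum p I (I \<union> J) + chi_sum p J (I \<union> J)"
    unfolding chi_sum_def using assms by (simp add: sum.union_disjoint)
  also have "chi_sum p I (I \<union> J) = chi_sum p I I + chi_sum p I J"
    unfolding chi_sum_def using assms by (simp add: sum.union_disjoint sum.distrib)
  also have "chi_sum p J (I \<union> J) = chi_sum p J I + chi_sum p J J"
    unfolding chi_sum_def using assms by (simp add: sum.union_disjoint sum.distrib)
  also have "chi_sum p J I = chi_sum p I J" by (rule chi_sum_swap[OF assms(1,2)])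
  finally show ?thesis by simp
qed

lemma chi_sum_trivial: "\<bar>chi_sum p A B\<bar> \<le> int (card A) * int (card B)"
proof -
  have "\<bar>chi_sum p A B\<bar> \<le> (\<Sum>a\<in>A. \<bar>\<Sum>b\<in>B. Legendre (a - b) p\<bar>)"
    unfolding chi_sum_def by (rule sum_abs)
  also have "\<dots> \<le> (\<Sum>a\<in>A. \<Sum>b\<in>B. \<bar>Legendre (a - b) p\<bar>)"
    by (intro sum_mono sum_abs)
  also have "\<dots> \<le> (\<Sum>a\<in>A. \<Sum>b\<in>B. 1)"
  proof (intro sum_mono)
    fix a b
    have "Legendre (a - b) p \<in> {-1,0,1}" by (rule Legendre_range)
    then show "\<bar>Legendre (a - b) p\<bar> \<le> 1" by auto
  qed
  also have "\<dots> = int (card A) * int (card B)" by simp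
  finally show ?thesis .
qed

lemma chi_sum_trivial_real:
  "\<bar>real_of_int (chi_sum p A B)\<bar> \<le> real (card A) * real (card B)"
proof -
  have "real_of_int \<bar>chi_sum p A B\<bar> \<le> real_of_int (int (card A) * int (card B))"
    using chi_sum_trivial[of p A B] by (simp only: of_int_le_iff)
  then show ?thesis by simp
qed

lemma f_bound:
  fixes p :: int and \<alpha> \<beta> K :: real and S :: "int set"
  assumes hyp: "\<forall>S. S \<subseteq> Fp p \<and> real (card S) > real_of_int p powr \<alpha> \<longrightarrow>
              \<bar>real_of_int (chi_sum p S S)\<bar> < real (card S) powr (2 - \<beta>)"
    and "\<beta> < 2" and "S \<subseteq> Fp p" and "real (card S) \<le> K"
  shows "\<bar>real_of_int (chi_sum p S S)\<bar> \<le> max (K powr (2 - \<beta>)) ((real_of_int p powr \<alpha>)^2)"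
proof (cases "real (card S) > real_of_int p powr \<alpha>")
  case True
  then have "\<bar>real_of_int (chi_sum p S S)\<bar> < real (card S) powr (2 - \<beta>)"
    using hyp assms(3) by blast
  also have "\<dots> \<le> K powr (2 - \<beta>)"
    using assms(2,4) by (intro powr_mono2) auto
  finally show ?thesis by simp
next
  case False
  have "\<bar>real_of_int (chi_sum p S S)\<bar> \<le> real (card S) * real (card S)"
    by (rule chi_sum_trivial_real)
  also have "\<dots> \<le> (real_of_int p powr \<alpha>)^2"
    using False by (simp add: power2_eq_square mult_mono)
  finally show ?thesis by simp
qed

theorem mainTheorem2:
  fixes p :: int and \<alpha> \<beta> \<tau> :: real and I J :: "int set"
  assumes "prime p" and "[p = 1] (mod 4)"
    and "\<alpha> > 0" and "0 < \<beta>" and "\<beta> < 2"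
    and hyp: "\<forall>S. S \<subseteq> Fp p \<and> real (card S) > real_of_int p powr \<alpha> \<longrightarrow>
              \<bar>real_of_int (chi_sum p S S)\<bar> < real (card S) powr (2 - \<beta>)"
    and "\<tau> \<ge> 2 * \<alpha> / (2 - \<beta>)"
    and "I \<subseteq> Fp p" and "J \<subseteq> Fp p" and "I \<inter> J = {}"
    and "card J \<le> card I"
    and "real (card I) \<le> real_of_int p powr (2 * \<tau> / (2 - \<beta>))"
  shows "\<bar>real_of_int (chi_sum p I J)\<bar> \<le>
           real_of_int p powr \<tau> * sqrt (3 * real (card I) * real (card J))"
proof -
  define n where "n = real (card I)"
  define m where "m = real (card J)"
  define P where "P = real_of_int p powr \<tau>"
  define Q where "Q = real_of_int p powr \<alpha>"
  define X where "X = real_of_int (chi_sum p I J)"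
  have p2: "real_of_int p \<ge> 2" using assms(1) prime_ge_2_int by simp
  have fI: "finite I" and fJ: "finite J"
    using assms(8,9) finite_subset unfolding Fp_def by auto
  have b2: "2 - \<beta> > 0" using assms(5) by simp
  have tau0: "\<tau> > 0"
  proof -
    have "2 * \<alpha> / (2 - \<beta>) > 0" using assms(3) b2 by simp
    then show ?thesis using assms(7) by linarith
  qed
  have P1: "P \<ge> 1" unfolding P_def using p2 tau0 by (intro ge_one_powr_ge_zero) auto
  have n0: "n \<ge> 0" and m0: "m \<ge> 0" unfolding n_def m_def by auto
  have mn: "m \<le> n" unfolding m_def n_def using assms(11) by simp
  have nP: "n powr (2 - \<beta>) \<le> P^2"
  proof -
    have "n powr (2 - \<beta>) \<le> (real_of_int p powr (2 * \<tau> / (2 - \<beta>))) powr (2 - \<beta>)"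
      using assms(12) b2 n0 unfolding n_def by (intro powr_mono2) auto
    also have "\<dots> = real_of_int p powr (2 * \<tau>)"
      using b2 by (simp add: powr_powr)
    also have "\<dots> = P^2" unfolding P_def using p2
      by (simp add: powr_realpow[symmetric] powr_powr mult.commute)
    finally show ?thesis .
  qed
  have QP: "Q^2 \<le> P^2"
  proof -
    have "2 * \<alpha> \<le> \<tau> * (2 - \<beta>)" using assms(7) b2 by (simp add: field_simps)
    also have "\<dots> \<le> 2 * \<tau>" using assms(4) tau0 by (simp add: algebra_simps)
    finally have "2 * \<alpha> \<le> 2 * \<tau>" .
    then have "real_of_int p powr (2 * \<alpha>) \<le> real_of_int p powr (2 * \<tau>)"
      using p2 by (intro powr_mono) auto
    then show ?thesis unfolding P_def Q_def using p2
      by (simp add: powr_realpow[symmetric] powr_powr mult.commute)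
  qed
  have U: "I \<union> J \<subseteq> Fp p" using assms(8,9) by auto
  have cU: "real (card (I \<union> J)) = n + m"
    unfolding n_def m_def using card_Un_disjoint[OF fI fJ assms(10)] by simp
  have fU: "\<bar>real_of_int (chi_sum p (I \<union> J) (I \<union> J))\<bar> \<le> 4 * P^2"
  proof -
    have "\<bar>real_of_int (chi_sum p (I \<union> J) (I \<union> J))\<bar> \<le> max ((2*n) powr (2 - \<beta>)) (Q^2)"
      unfolding Q_def using f_bound[OF hyp assms(5) U, of "2*n"] cU mn by simp
    moreover have "(2*n) powr (2 - \<beta>) \<le> 4 * P^2"
    proof -
      have "(2*n) powr (2 - \<beta>) = 2 powr (2 - \<beta>) * n powr (2 - \<beta>)"
        using n0 by (simp add: powr_mult)
      also have "2 powr (2 - \<beta>) \<le> (2::real) powr 2"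
        using assms(4) by (intro powr_mono) auto
      then have "2 powr (2 - \<beta>) \<le> (4::real)" by simp
      then have "2 powr (2 - \<beta>) * n powr (2 - \<beta>) \<le> 4 * P^2"
        using nP by (intro mult_mono) auto
      finally show ?thesis .
    qed
    ultimately show ?thesis using QP by linarith
  qed
  have fI': "\<bar>real_of_int (chi_sum p I I)\<bar> \<le> P^2"
    using f_bound[OF hyp assms(5,8), of n] nP QP unfolding n_def Q_def by simp
  have fJ': "\<bar>real_of_int (chi_sum p J J)\<bar> \<le> P^2"
    using f_bound[OF hyp assms(5,9), of n] nP QP mn unfolding n_def m_def Q_def by simp
  have dec: "real_of_int (chi_sum p (I \<union> J) (I \<union> J)) =
      real_of_int (chi_sum p I I) + real_of_int (chi_sum p J J) + 2 * X"
    unfolding X_def using chi_sum_union[OF assms(1,2) fI fJ assms(10)] by simp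
  have X3: "\<bar>X\<bar> \<le> 3 * P^2" using dec fU fI' fJ' by linarith
  have Xt: "\<bar>X\<bar> \<le> n * m"
    unfolding X_def n_def m_def by (rule chi_sum_trivial_real)
  have "\<bar>X\<bar> \<le> P * sqrt (3 * n * m)"
  proof (cases "n * m \<le> 3 * P^2")
    case True
    have "n * m = sqrt (n * m) * sqrt (n * m)" using n0 m0 by simp
    also have "\<dots> \<le> sqrt (n * m) * sqrt (3 * P^2)"
      using True n0 m0 by (intro mult_left_mono) auto
    also have "\<dots> = P * sqrt (3 * n * m)"
      using P1 by (simp add: real_sqrt_mult)
    finally show ?thesis using Xt by linarith
  next
    case False
    have "9 * P^2 \<le> 3 * n * m" using False by linarith
    then have "sqrt (9 * P^2) \<le> sqrt (3 * n * m)" by (rule real_sqrt_le_mono)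
    then have "3 * P \<le> sqrt (3 * n * m)" using P1 by (simp add: real_sqrt_mult)
    then have "3 * P^2 \<le> P * sqrt (3 * n * m)"
    proof -
      have "3 * P^2 = P * (3 * P)" by (simp add: power2_eq_square)
      also have "\<dots> \<le> P * sqrt (3 * n * m)"
        using P1 \<open>3 * P \<le> sqrt (3 * n * m)\<close> by (intro mult_left_mono) auto
      finally show ?thesis .
    qed
    then show ?thesis using X3 by linarith
  qed
  then show ?thesis unfolding X_def P_def n_def m_def .
qed

end
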